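(* The Banach spaces $ces_\infty$ and $\ell_\infty$ are not isomorphic.
   Context: $ces_\infty$ is the space of real sequences $a=(a_n)_{n\ge1}$ with $\|a\|=\sup_{n\ge1}\frac1n\sum_{k=1}^n|a_k|<\infty$. "Isomorphic" means linearly isomorphic as Banach spaces. *)

theory Defs
  imports "HOL-Analysis.Analysis"
begin

(* Sequences are indexed from 0: a k here is a_(k+1) in the paper. *)

definition ces_avg :: "(nat \<Rightarrow> real) \<Rightarrow> nat \<Rightarrow> real" where
  "ces_avg a n = (\<Sum>k\<le>n. \<bar>a k\<bar>) / real (n + 1)"

definition ces_inf :: "(nat \<Rightarrow> real) set" where
  "ces_inf = {a. bdd_above (range (ces_avg a))}"

definition ces_norm :: "(nat \<Rightarrow> real) \<Rightarrow> real" where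
  "ces_norm a = (SUP n. ces_avg a n)"

definition l_inf :: "(nat \<Rightarrow> real) set" where
  "l_inf = {a. bdd_above (range (\<lambda>n. \<bar>a n\<bar>))}"

definition linf_norm :: "(nat \<Rightarrow> real) \<Rightarrow> real" where
  "linf_norm a = (SUP n. \<bar>a n\<bar>)"

definition seq_isomorphic ::
  "(nat \<Rightarrow> real) set \<Rightarrow> ((nat \<Rightarrow> real) \<Rightarrow> real) \<Rightarrow>
   (nat \<Rightarrow> real) set \<Rightarrow> ((nat \<Rightarrow> real) \<Rightarrow> real) \<Rightarrow> bool" where
  "seq_isomorphic X nX Y nY \<longleftrightarrow>
     (\<exists>T. bij_betw T X Y
        \<and> (\<forall>a\<in>X. \<forall>b\<in>X. T (\<lambda>n. a n + b n) = (\<lambda>n. T a n + T b n))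
        \<and> (\<forall>c::real. \<forall>a\<in>X. T (\<lambda>n. c * a n) = (\<lambda>n. c * T a n))
        \<and> (\<exists>C. \<forall>a\<in>X. nY (T a) \<le> C * nX a)
        \<and> (\<exists>D. \<forall>a\<in>X. nX a \<le> D * nY (T a)))"

end

theory Submission
  imports Defs
begin



definition sg :: "nat set \<Rightarrow> nat \<Rightarrow> real" where
  "sg J i = (if i \<in> J then -1 else 1)"

definition lam :: "(nat \<Rightarrow> real) \<Rightarrow> nat set \<Rightarrow> nat set \<Rightarrow> real" where
  "lam a F J = (\<Prod>j\<in>F. (1 + sg J j * a j) / 2)"

lemma lam_split:
  assumes "finite F" "J \<subseteq> F"
  shows "lam a F J * c = (\<Prod>j\<in>J. (1 - a j)/2) * ((\<Prod>j\<in>F-J. (1 + a j)/2) * c)"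
proof -
  have "lam a F J = (\<Prod>j\<in>J. (1 + sg J j * a j) / 2) * (\<Prod>j\<in>F-J. (1 + sg J j * a j) / 2)"
    unfolding lam_def using prod.subset_diff[OF assms(2) assms(1)] by (simp add: mult.commute)
  also have "\<dots> = (\<Prod>j\<in>J. (1 - a j)/2) * (\<Prod>j\<in>F-J. (1 + a j)/2)"
    by (intro arg_cong2[where f="(*)"] prod.cong) (auto simp: sg_def)
  finally show ?thesis by simp
qed

lemma lam_sum1:
  assumes "finite F"
  shows "(\<Sum>J\<in>Pow F. lam a F J) = 1"
proof -
  have "(\<Sum>J\<in>Pow F. lam a F J) = (\<Sum>J\<in>Pow F. (\<Prod>j\<in>J. (1 - a j)/2) * (\<Prod>j\<in>F-J. (1 + a j)/2))"
    using lam_split[OF assms, of _ a 1] by (intro sum.cong) auto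
  also have "\<dots> = (\<Prod>j\<in>F. (1 - a j)/2 + (1 + a j)/2)"
    by (rule prod_add[OF assms, symmetric])
  also have "\<dots> = 1" by (simp add: add_divide_distrib[symmetric])
  finally show ?thesis .
qed

lemma lam_sumsg:
  assumes "finite F" "i \<in> F"
  shows "(\<Sum>J\<in>Pow F. lam a F J * sg J i) = a i"
proof -
  define f1 where "f1 j = (if j = i then -((1 - a j)/2) else (1 - a j)/2)" for j
  have "(\<Sum>J\<in>Pow F. lam a F J * sg J i) = (\<Sum>J\<in>Pow F. (\<Prod>j\<in>J. f1 j) * (\<Prod>j\<in>F-J. (1 + a j)/2))"
  proof (intro sum.cong refl)
    fix J assume J: "J \<in> Pow F"
    have e: "(\<Prod>j\<in>J. f1 j) = sg J i * (\<Prod>j\<in>J. (1 - a j)/2)"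
    proof (cases "i \<in> J")
      case True
      have fJ: "finite J" using J assms(1) finite_subset by auto
      have "(\<Prod>j\<in>J. f1 j) = f1 i * (\<Prod>j\<in>J-{i}. f1 j)" using prod.remove[OF fJ True] by simp
      also have "(\<Prod>j\<in>J-{i}. f1 j) = (\<Prod>j\<in>J-{i}. (1 - a j)/2)" by (intro prod.cong) (auto simp: f1_def)
      also have "(\<Prod>j\<in>J. (1 - a j)/2) = (1 - a i)/2 * (\<Prod>j\<in>J-{i}. (1 - a j)/2)"
        by (rule prod.remove[OF fJ True])
      ultimately show ?thesis using True by (simp add: f1_def sg_def)
    next
      case False
      then show ?thesis by (auto simp: sg_def f1_def intro!: prod.cong)
    qed
    show "lam a F J * sg J i = (\<Prod>j\<in>J. f1 j) * (\<Prod>j\<in>F-J. (1 + a j)/2)"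
      using lam_split[OF assms(1), of J a "sg J i"] J e by (simp add: mult_ac)
  qed
  also have "\<dots> = (\<Prod>j\<in>F. f1 j + (1 + a j)/2)"
    by (rule prod_add[OF assms(1), symmetric])
  also have "\<dots> = (\<Prod>j\<in>F. if j = i then a i else 1)"
    by (intro prod.cong) (auto simp: f1_def add_divide_distrib[symmetric] diff_divide_distrib[symmetric])
  also have "\<dots> = a i" using assms by (simp add: prod.delta)
  finally show ?thesis .
qed

lemma lam_nonneg:
  assumes "\<And>j. \<bar>a j\<bar> \<le> 1"
  shows "lam a F J \<ge> 0"
  unfolding lam_def
proof (intro prod_nonneg)
  fix j show "0 \<le> (1 + sg J j * a j) / 2" using assms[of j] by (auto simp: sg_def)
qed

lemma sg_symdiff: "sg ((I - J) \<union> (J - I)) i = sg I i * sg J i"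
  by (auto simp: sg_def)

lemma reindex:
  assumes "finite F" "J \<subseteq> F"
  shows "(\<Sum>I\<in>Pow F. sg I i * g ((I - J) \<union> (J - I))) = sg J i * (\<Sum>I\<in>Pow F. sg I i * g I)"
proof -
  let ?h = "\<lambda>I. (I - J) \<union> (J - I)"
  have bij: "bij_betw ?h (Pow F) (Pow F)"
    by (rule bij_betwI[where g="?h"]) (use assms in auto)
  have "(\<Sum>I\<in>Pow F. sg I i * g I) = (\<Sum>I\<in>Pow F. sg (?h I) i * g (?h I))"
    using sum.reindex_bij_betw[OF bij, of "\<lambda>I. sg I i * g I"] by simp
  also have "\<dots> = (\<Sum>I\<in>Pow F. sg J i * (sg I i * g (?h I)))"
    by (intro sum.cong refl) (simp add: sg_symdiff)
  finally show ?thesis by (simp add: sum_distrib_left sg_def)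
qed




definition Ssum :: "nat \<Rightarrow> nat set \<Rightarrow> real" where
  "Ssum N I = (\<Sum>i<N. sg I i)"

lemma pow_split:
  "(\<Sum>I\<in>Pow {..<Suc N}. h I) = (\<Sum>I\<in>Pow {..<N}. h I + h (insert N I))"
proof -
  have "Pow {..<Suc N} = Pow {..<N} \<union> insert N ` Pow {..<N}"
    by (simp add: lessThan_Suc Pow_insert)
  moreover have "Pow {..<N} \<inter> insert N ` Pow {..<N} = {}" by auto
  moreover have "inj_on (insert N) (Pow {..<N})"
    by (rule inj_onI) (metis PowD Diff_insert_absorb lessThan_iff less_irrefl subsetD)
  ultimately have "(\<Sum>I\<in>Pow {..<Suc N}. h I) = (\<Sum>I\<in>Pow {..<N}. h I) + (\<Sum>I\<in>Pow {..<N}. h (insert N I))"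
    by (simp add: sum.union_disjoint sum.reindex)
  then show ?thesis by (simp add: sum.distrib)
qed

lemma Ssum_Suc1: "I \<subseteq> {..<N} \<Longrightarrow> Ssum (Suc N) I = Ssum N I + 1"
  by (auto simp: Ssum_def sg_def)

lemma Ssum_Suc2: "I \<subseteq> {..<N} \<Longrightarrow> Ssum (Suc N) (insert N I) = Ssum N I - 1"
proof -
  assume "I \<subseteq> {..<N}"
  have "(\<Sum>i<N. sg (insert N I) i) = (\<Sum>i<N. sg I i)"
    by (intro sum.cong) (auto simp: sg_def)
  then show ?thesis by (simp add: Ssum_def sg_def)
qed

lemma card_pow: "(\<Sum>I\<in>Pow {..<N}. (1::real)) = 2^N"
  by (simp add: card_Pow)

lemma mom2: "(\<Sum>I\<in>Pow {..<N}. (Ssum N I)^2) = real N * 2^N"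
proof (induction N)
  case 0 then show ?case by (simp add: Ssum_def)
next
  case (Suc N)
  have "(\<Sum>I\<in>Pow {..<Suc N}. (Ssum (Suc N) I)^2) = (\<Sum>I\<in>Pow {..<N}. 2 * (Ssum N I)^2 + 2)"
    unfolding pow_split
    by (intro sum.cong refl) (auto simp: Ssum_Suc1 Ssum_Suc2 power2_eq_square algebra_simps)
  also have "\<dots> = 2 * (\<Sum>I\<in>Pow {..<N}. (Ssum N I)^2) + 2 * 2^N"
    by (simp add: sum.distrib sum_distrib_left card_Pow)
  finally show ?case using Suc by (simp add: algebra_simps)
qed

lemma mom4: "(\<Sum>I\<in>Pow {..<N}. (Ssum N I)^4) = (3 * real N^2 - 2 * real N) * 2^N"
proof (induction N)
  case 0 then show ?case by (simp add: Ssum_def)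
next
  case (Suc N)
  have "(\<Sum>I\<in>Pow {..<Suc N}. (Ssum (Suc N) I)^4) = (\<Sum>I\<in>Pow {..<N}. 2 * (Ssum N I)^4 + 12 * (Ssum N I)^2 + 2)"
    unfolding pow_split
    by (intro sum.cong refl) (auto simp: Ssum_Suc1 Ssum_Suc2 power2_eq_square power4_eq_xxxx algebra_simps)
  also have "\<dots> = 2 * (\<Sum>I\<in>Pow {..<N}. (Ssum N I)^4) + 12 * (\<Sum>I\<in>Pow {..<N}. (Ssum N I)^2) + 2 * 2^N"
    by (simp add: sum.distrib sum_distrib_left card_Pow)
  finally show ?case using Suc mom2[of N] by (simp add: algebra_simps power2_eq_square)
qed

lemma pointwise_lb:
  fixes s t :: real assumes "t > 0"
  shows "s^2 / t - 4 * s^4 / (27 * t^3) \<le> \<bar>s\<bar>"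
proof -
  define y where "y = \<bar>s\<bar> / t"
  have y0: "y \<ge> 0" using assms by (simp add: y_def)
  have key: "y - 4 * y^3 / 27 \<le> 1"
  proof -
    have "0 \<le> (2*y - 3)^2 * (y + 3)" using y0 by simp
    then show ?thesis by (simp add: power2_eq_square power3_eq_cube algebra_simps)
  qed
  have sabs: "\<bar>s\<bar> = y * t" using assms by (simp add: y_def)
  have s2: "s^2 = (y*t)^2" by (simp flip: sabs)
  have s4: "s^4 = (y*t)^4"
  proof -
    have "s^4 = (s^2)^2" by simp
    then show ?thesis unfolding s2 by simp
  qed
  have a: "(y*t)^2 / t = y^2 * t" using assms by (simp add: power2_eq_square)
  have b: "(y*t)^4 / (27 * t^3) = y^4 * t / 27" using assms
    by (simp add: power4_eq_xxxx power3_eq_cube)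
  have "s^2 / t - 4 * s^4 / (27 * t^3) = y^2 * t - 4 * (y^4 * t / 27)"
    unfolding s2 s4 a[symmetric] b[symmetric] by simp
  also have "\<dots> = y * t * (y - 4 * y^3 / 27)"
    by (simp add: power2_eq_square power3_eq_cube power4_eq_xxxx algebra_simps)
  also have "\<dots> \<le> y * t * 1" using key y0 assms by (intro mult_left_mono) auto
  finally show ?thesis by (simp add: sabs)
qed

lemma mean_abs_lb:
  assumes "t \<ge> 1"
  shows "(\<Sum>I\<in>Pow {..<t^2}. \<bar>Ssum (t^2) I\<bar>) \<ge> 2^(t^2) * (real t / 2)"
proof -
  define N where "N = t^2"
  have tp: "real t > 0" using assms by simp
  have "(\<Sum>I\<in>Pow {..<N}. (Ssum N I)^2 / real t - 4 * (Ssum N I)^4 / (27 * real t^3)) \<le> (\<Sum>I\<in>Pow {..<N}. \<bar>Ssum N I\<bar>)"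
    by (intro sum_mono pointwise_lb tp)
  moreover have "(\<Sum>I\<in>Pow {..<N}. (Ssum N I)^2 / real t - 4 * (Ssum N I)^4 / (27 * real t^3))
     = (real N * 2^N) / real t - 4 * ((3 * real N^2 - 2 * real N) * 2^N) / (27 * real t^3)"
  proof -
    have "(\<Sum>I\<in>Pow {..<N}. (Ssum N I)^2 / real t - 4 * (Ssum N I)^4 / (27 * real t^3))
       = (\<Sum>I\<in>Pow {..<N}. (Ssum N I)^2) / real t - 4 * (\<Sum>I\<in>Pow {..<N}. (Ssum N I)^4) / (27 * real t^3)"
      by (simp only: sum_subtractf sum_divide_distrib sum_distrib_left times_divide_eq_right)
    then show ?thesis by (simp only: mom2 mom4)
  qed
  moreover have "(real N * 2^N) / real t - 4 * ((3 * real N^2 - 2 * real N) * 2^N) / (27 * real t^3) \<ge> 2^N * (real t / 2)"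
  proof -
    have e: "real N = real t ^ 2" by (simp add: N_def)
    have "(real N * 2^N) / real t - 4 * ((3 * real N^2 - 2 * real N) * 2^N) / (27 * real t^3)
       = 2^N * (real t - 4 * (3 * real t^2 - 2) / (27 * real t))"
      using tp unfolding e by (simp add: field_simps power2_eq_square power3_eq_cube)
    also have "\<dots> \<ge> 2^N * (real t / 2)"
    proof (intro mult_left_mono)
      have "4 * (3 * real t^2 - 2) / (27 * real t) \<le> 4 * (3 * real t^2) / (27 * real t)"
        using tp by (intro divide_right_mono) auto
      also have "\<dots> = 4 * real t / 9" using tp by (simp add: power2_eq_square field_simps)
      finally show "real t / 2 \<le> real t - 4 * (3 * real t^2 - 2) / (27 * real t)" using tp by linarith
    qed simp
    finally show ?thesis .
  qed
  ultimately show ?thesis unfolding N_def by linarith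
qed




lemma ces_avg_nonneg: "ces_avg a n \<ge> 0"
  by (simp add: ces_avg_def sum_nonneg)

lemma ces_avg_add: "ces_avg (\<lambda>n. a n + b n) n \<le> ces_avg a n + ces_avg b n"
proof -
  have "(\<Sum>k\<le>n. \<bar>a k + b k\<bar>) \<le> (\<Sum>k\<le>n. \<bar>a k\<bar>) + (\<Sum>k\<le>n. \<bar>b k\<bar>)"
    by (simp add: sum.distrib[symmetric] sum_mono abs_triangle_ineq)
  then show ?thesis by (simp add: ces_avg_def add_divide_distrib[symmetric] divide_right_mono)
qed

lemma ces_avg_scale: "ces_avg (\<lambda>n. c * a n) n = \<bar>c\<bar> * ces_avg a n"
  by (simp add: ces_avg_def abs_mult sum_distrib_left)

lemma ces_inf_add: "a \<in> ces_inf \<Longrightarrow> b \<in> ces_inf \<Longrightarrow> (\<lambda>n. a n + b n) \<in> ces_inf"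
proof -
  assume "a \<in> ces_inf" "b \<in> ces_inf"
  then obtain A B where hA: "\<And>n. ces_avg a n \<le> A" and hB: "\<And>n. ces_avg b n \<le> B"
    by (auto simp: ces_inf_def bdd_above_def)
  have "ces_avg (\<lambda>n. a n + b n) n \<le> A + B" for n
    using ces_avg_add[of a b n] hA[of n] hB[of n] by linarith
  then show ?thesis by (auto simp: ces_inf_def bdd_above_def)
qed

lemma ces_inf_scale: "a \<in> ces_inf \<Longrightarrow> (\<lambda>n. c * a n) \<in> ces_inf"
proof -
  assume "a \<in> ces_inf"
  then obtain A where "\<And>n. ces_avg a n \<le> A" by (auto simp: ces_inf_def bdd_above_def)
  then have "\<And>n. ces_avg (\<lambda>n. c * a n) n \<le> \<bar>c\<bar> * A"
    by (simp add: ces_avg_scale mult_left_mono)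
  then show ?thesis by (auto simp: ces_inf_def bdd_above_def)
qed

lemma ces_inf_zero: "(\<lambda>n. 0) \<in> ces_inf"
  by (auto simp: ces_inf_def ces_avg_def)

lemma ces_inf_sum:
  assumes "finite F" "\<And>j. j \<in> F \<Longrightarrow> a j \<in> ces_inf"
  shows "(\<lambda>n. \<Sum>j\<in>F. c j * a j n) \<in> ces_inf"
  using assms
proof (induction F rule: finite_induct)
  case empty then show ?case by (simp add: ces_inf_zero)
next
  case (insert x F)
  then show ?case by (simp add: ces_inf_add ces_inf_scale)
qed

lemma T_sum:
  assumes add: "\<forall>a\<in>ces_inf. \<forall>b\<in>ces_inf. T (\<lambda>n. a n + b n) = (\<lambda>n. T a n + T b n)"
    and sc: "\<forall>c::real. \<forall>a\<in>ces_inf. T (\<lambda>n. c * a n) = (\<lambda>n. c * T a n)"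
    and F: "finite F" and aF: "\<And>j. j \<in> F \<Longrightarrow> a j \<in> ces_inf"
  shows "T (\<lambda>n. \<Sum>j\<in>F. c j * a j n) = (\<lambda>n. \<Sum>j\<in>F. c j * T (a j) n)"
  using F aF
proof (induction F rule: finite_induct)
  case empty
  show ?case using sc[rule_format, of "\<lambda>n. 0" 0] ces_inf_zero by simp
next
  case (insert x F)
  have ax: "a x \<in> ces_inf" using insert by auto
  have s: "(\<lambda>n. \<Sum>j\<in>F. c j * a j n) \<in> ces_inf" using insert by (intro ces_inf_sum) auto
  have "T (\<lambda>n. \<Sum>j\<in>insert x F. c j * a j n) = T (\<lambda>n. (\<lambda>n. c x * a x n) n + (\<lambda>n. \<Sum>j\<in>F. c j * a j n) n)"
    using insert by simp
  also have "\<dots> = (\<lambda>n. T (\<lambda>n. c x * a x n) n + T (\<lambda>n. \<Sum>j\<in>F. c j * a j n) n)"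
    using add[rule_format, OF ces_inf_scale[OF ax, of "c x"] s] by simp
  also have "\<dots> = (\<lambda>n. \<Sum>j\<in>insert x F. c j * T (a j) n)"
    using insert sc ax by simp
  finally show ?case .
qed

lemma ces_avg_le_norm: "a \<in> ces_inf \<Longrightarrow> ces_avg a n \<le> ces_norm a"
  unfolding ces_norm_def ces_inf_def by (auto intro: cSUP_upper)

lemma ces_norm_le: "(\<And>n. ces_avg a n \<le> M) \<Longrightarrow> ces_norm a \<le> M"
  unfolding ces_norm_def by (rule cSUP_least) auto

lemma ces_norm_nonneg: "a \<in> ces_inf \<Longrightarrow> ces_norm a \<ge> 0"
  using ces_avg_le_norm[of a 0] ces_avg_nonneg[of a 0] by linarith

lemma block_bound:
  assumes "N \<ge> 1" "a \<in> ces_inf"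
  shows "(\<Sum>i<N. \<bar>a (N+i)\<bar>) \<le> 2 * real N * ces_norm a"
proof -
  have "(\<Sum>i<N. \<bar>a (N+i)\<bar>) = (\<Sum>k\<in>(\<lambda>i. N+i) ` {..<N}. \<bar>a k\<bar>)"
    by (simp add: sum.reindex)
  also have "\<dots> \<le> (\<Sum>k\<le>2*N-1. \<bar>a k\<bar>)"
    by (intro sum_mono2) auto
  also have "\<dots> = ces_avg a (2*N-1) * (2 * real N)"
    using assms(1) by (simp add: ces_avg_def of_nat_diff)
  also have "\<dots> \<le> ces_norm a * (2 * real N)"
    by (intro mult_right_mono ces_avg_le_norm assms) auto
  finally show ?thesis by (simp add: mult_ac)
qed

definition vv :: "nat \<Rightarrow> nat \<Rightarrow> nat \<Rightarrow> real" where
  "vv N i = (\<lambda>n. if n = N + i then real N else 0)"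

lemma vv_avg: "ces_avg (vv N i) n \<le> 1"
proof -
  have "(\<Sum>k\<le>n. \<bar>vv N i k\<bar>) = (if N + i \<le> n then real N else 0)"
  proof -
    have "(\<Sum>k\<le>n. \<bar>vv N i k\<bar>) = (\<Sum>k\<le>n. if k = N + i then real N else 0)"
      by (intro sum.cong) (auto simp: vv_def)
    also have "\<dots> = (if N + i \<le> n then real N else 0)"
      by (subst sum.delta) auto
    finally show ?thesis .
  qed
  then show ?thesis by (auto simp: ces_avg_def field_simps)
qed

lemma vv_in: "vv N i \<in> ces_inf"
  using vv_avg by (auto simp: ces_inf_def bdd_above_def)

lemma vv_norm: "ces_norm (vv N i) \<le> 1"
  by (rule ces_norm_le[OF vv_avg])

lemma linf_le: "f \<in> l_inf \<Longrightarrow> \<bar>f k\<bar> \<le> linf_norm f"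
  unfolding linf_norm_def l_inf_def by (auto intro: cSUP_upper)

lemma linf_bounded:
  assumes "\<And>k. \<bar>f k\<bar> \<le> A"
  shows "f \<in> l_inf" "linf_norm f \<le> A"
  using assms unfolding linf_norm_def l_inf_def
  by (auto intro!: cSUP_least simp: bdd_above_def)




theorem corollary4:
  shows "\<not> seq_isomorphic ces_inf ces_norm l_inf linf_norm"
proof
  assume "seq_isomorphic ces_inf ces_norm l_inf linf_norm"
  then obtain T C D where bij: "bij_betw T ces_inf l_inf"
    and add: "\<forall>a\<in>ces_inf. \<forall>b\<in>ces_inf. T (\<lambda>n. a n + b n) = (\<lambda>n. T a n + T b n)"
    and sc: "\<forall>c::real. \<forall>a\<in>ces_inf. T (\<lambda>n. c * a n) = (\<lambda>n. c * T a n)"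
    and hC: "\<forall>a\<in>ces_inf. linf_norm (T a) \<le> C * ces_norm a"
    and hD: "\<forall>a\<in>ces_inf. ces_norm a \<le> D * linf_norm (T a)"
    unfolding seq_isomorphic_def by blast
  define A where "A = max C 1"
  define D' where "D' = max D 0"
  have A1: "A \<ge> 1" by (simp add: A_def)
  have D0: "D' \<ge> 0" by (simp add: D'_def)
  define t where "t = nat (ceiling (4 * D' * A)) + 1"
  have t1: "t \<ge> 1" by (simp add: t_def)
  have tbig: "real t > 4 * D' * A" unfolding t_def by linarith
  define N where "N = t^2"
  have N1: "N \<ge> 1" using t1 by (simp add: N_def)
  define P where "P = Pow {..<N}"
  have finP: "finite P" by (simp add: P_def)
  define u where "u i = T (vv N i)" for i
  have u_bd: "\<bar>u i k\<bar> \<le> A" for i k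
  proof -
    have ul: "u i \<in> l_inf" unfolding u_def using bij vv_in bij_betwE by blast
    have "\<bar>u i k\<bar> \<le> linf_norm (u i)" by (rule linf_le[OF ul])
    also have "\<dots> \<le> C * ces_norm (vv N i)" using hC vv_in u_def by auto
    also have "\<dots> \<le> A"
    proof (cases "C \<ge> 0")
      case True
      then have "C * ces_norm (vv N i) \<le> C * 1" by (intro mult_left_mono vv_norm)
      then show ?thesis by (simp add: A_def)
    next
      case False
      then have "C * ces_norm (vv N i) \<le> 0"
        using ces_norm_nonneg[OF vv_in] by (simp add: mult_nonpos_nonneg)
      then show ?thesis using A1 by linarith
    qed
    finally show ?thesis .
  qed
  define g where "g I = sgn (Ssum N I)" for I
  have g_bd: "\<bar>g I\<bar> \<le> 1" for I by (simp add: g_def sgn_if)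
  define lk where "lk k J = lam (\<lambda>j. u j k / A) {..<N} J" for k J
  have lk_nn: "lk k J \<ge> 0" for k J
    unfolding lk_def by (rule lam_nonneg) (use u_bd A1 in \<open>auto simp: abs_divide\<close>)
  have lk_sum: "(\<Sum>J\<in>P. lk k J) = 1" for k
    unfolding lk_def P_def by (rule lam_sum1) simp
  have lk_sg: "i < N \<Longrightarrow> (\<Sum>J\<in>P. lk k J * sg J i) = u i k / A" for k i
    unfolding lk_def P_def by (subst lam_sumsg) auto
  define f where "f I = (\<lambda>k. A * (\<Sum>J\<in>P. lk k J * g ((I - J) \<union> (J - I))))" for I
  have f_bd: "\<bar>f I k\<bar> \<le> A" for I k
  proof -
    have "\<bar>\<Sum>J\<in>P. lk k J * g ((I - J) \<union> (J - I))\<bar> \<le> (\<Sum>J\<in>P. \<bar>lk k J * g ((I - J) \<union> (J - I))\<bar>)"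
      by (rule sum_abs)
    also have "\<dots> \<le> (\<Sum>J\<in>P. lk k J)"
      by (intro sum_mono) (use lk_nn g_bd in \<open>auto simp: abs_mult intro: mult_left_le\<close>)
    finally have "\<bar>\<Sum>J\<in>P. lk k J * g ((I - J) \<union> (J - I))\<bar> \<le> 1" using lk_sum by simp
    then show ?thesis using A1 by (simp add: f_def abs_mult)
  qed
  have f_in: "f I \<in> l_inf" for I using linf_bounded(1)[OF f_bd] .
  have f_norm: "linf_norm (f I) \<le> A" for I using linf_bounded(2)[OF f_bd] .
  define aa where "aa I = inv_into ces_inf T (f I)" for I
  have aa_in: "aa I \<in> ces_inf" for I
    unfolding aa_def using bij f_in[of I] by (metis bij_betw_def inv_into_into)
  have Taa: "T (aa I) = f I" for I
    unfolding aa_def using bij f_in[of I] by (metis bij_betw_inv_into_right)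
  have aa_bd: "ces_norm (aa I) \<le> D' * A" for I
  proof -
    have ln0: "linf_norm (f I) \<ge> 0" using linf_le[OF f_in, of I 0] by linarith
    have "ces_norm (aa I) \<le> D * linf_norm (f I)" using hD aa_in Taa by metis
    also have "\<dots> \<le> D' * linf_norm (f I)" by (intro mult_right_mono ln0) (simp add: D'_def)
    also have "\<dots> \<le> D' * A" by (intro mult_left_mono f_norm D0)
    finally show ?thesis .
  qed
  define G where "G i = (\<Sum>I\<in>P. sg I i * g I)" for i
  have pw: "(\<Sum>I\<in>P. sg I i * f I k) = G i * u i k" if i: "i < N" for i k
  proof -
    have "(\<Sum>I\<in>P. sg I i * f I k) = A * (\<Sum>J\<in>P. lk k J * (\<Sum>I\<in>P. sg I i * g ((I - J) \<union> (J - I))))"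
    proof -
      have "(\<Sum>I\<in>P. sg I i * f I k) = (\<Sum>I\<in>P. \<Sum>J\<in>P. A * (lk k J * (sg I i * g ((I - J) \<union> (J - I)))))"
        by (intro sum.cong refl) (simp add: f_def sum_distrib_left mult_ac)
      also have "\<dots> = (\<Sum>J\<in>P. \<Sum>I\<in>P. A * (lk k J * (sg I i * g ((I - J) \<union> (J - I)))))"
        by (rule sum.swap)
      also have "\<dots> = A * (\<Sum>J\<in>P. lk k J * (\<Sum>I\<in>P. sg I i * g ((I - J) \<union> (J - I))))"
        by (simp only: sum_distrib_left)
      finally show ?thesis .
    qed
    also have "\<dots> = A * (\<Sum>J\<in>P. lk k J * sg J i * G i)"
      by (intro arg_cong[where f="\<lambda>x. A * x"] sum.cong refl)
         (simp add: G_def P_def reindex mult_ac)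
    also have "\<dots> = A * ((\<Sum>J\<in>P. lk k J * sg J i) * G i)"
      by (simp add: sum_distrib_right)
    also have "\<dots> = G i * u i k" using lk_sg[OF i] A1 by simp
    finally show ?thesis .
  qed
  have key: "(\<Sum>I\<in>P. sg I i * aa I (N + i)) = G i * real N" if i: "i < N" for i
  proof -
    define b where "b = (\<lambda>n. \<Sum>I\<in>P. sg I i * aa I n)"
    have b_in: "b \<in> ces_inf" unfolding b_def by (intro ces_inf_sum finP aa_in)
    have Tb: "T b = (\<lambda>k. \<Sum>I\<in>P. sg I i * f I k)"
      unfolding b_def using T_sum[OF add sc finP, of aa] aa_in Taa by simp
    have gv_in: "(\<lambda>n. G i * vv N i n) \<in> ces_inf" by (intro ces_inf_scale vv_in)
    have Tgv: "T (\<lambda>n. G i * vv N i n) = (\<lambda>k. G i * u i k)"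
      using sc vv_in unfolding u_def by blast
    have "T b = T (\<lambda>n. G i * vv N i n)" using Tb Tgv pw[OF i] by simp
    then have "b = (\<lambda>n. G i * vv N i n)"
      using bij b_in gv_in unfolding bij_betw_def inj_on_def by blast
    then have "b (N + i) = G i * real N" by (simp add: vv_def)
    then show ?thesis by (simp add: b_def)
  qed
  have "(\<Sum>i<N. G i) = (\<Sum>I\<in>P. Ssum N I * g I)"
  proof -
    have "(\<Sum>i<N. G i) = (\<Sum>i<N. \<Sum>I\<in>P. sg I i * g I)" by (simp add: G_def)
    also have "\<dots> = (\<Sum>I\<in>P. \<Sum>i<N. sg I i * g I)" by (rule sum.swap)
    also have "\<dots> = (\<Sum>I\<in>P. Ssum N I * g I)" by (simp add: Ssum_def sum_distrib_right)
    finally show ?thesis .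
  qed
  also have "\<dots> = (\<Sum>I\<in>P. \<bar>Ssum N I\<bar>)"
    by (intro sum.cong refl) (simp add: g_def abs_sgn)
  finally have sumG: "(\<Sum>i<N. G i) = (\<Sum>I\<in>P. \<bar>Ssum N I\<bar>)" .
  have lb: "(\<Sum>I\<in>P. \<bar>Ssum N I\<bar>) \<ge> 2^N * (real t / 2)"
    unfolding P_def N_def by (rule mean_abs_lb[OF t1])
  have "(\<Sum>i<N. G i) * real N = (\<Sum>i<N. \<Sum>I\<in>P. sg I i * aa I (N + i))"
    by (simp add: sum_distrib_right key)
  also have "\<dots> = (\<Sum>I\<in>P. \<Sum>i<N. sg I i * aa I (N + i))" by (rule sum.swap)
  also have "\<dots> \<le> (\<Sum>I\<in>P. \<Sum>i<N. \<bar>aa I (N + i)\<bar>)"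
    by (intro sum_mono) (auto simp: sg_def)
  also have "\<dots> \<le> (\<Sum>I\<in>P. 2 * real N * (D' * A))"
  proof (intro sum_mono)
    fix I
    have "(\<Sum>i<N. \<bar>aa I (N + i)\<bar>) \<le> 2 * real N * ces_norm (aa I)" by (rule block_bound[OF N1 aa_in])
    also have "\<dots> \<le> 2 * real N * (D' * A)" by (intro mult_left_mono aa_bd) auto
    finally show "(\<Sum>i<N. \<bar>aa I (N + i)\<bar>) \<le> 2 * real N * (D' * A)" .
  qed
  also have "\<dots> = 2^N * (2 * real N * (D' * A))" by (simp add: P_def card_Pow)
  finally have up: "(\<Sum>i<N. G i) * real N \<le> 2^N * (2 * real N * (D' * A))" .
  have "2^N * (real t / 2) * real N \<le> 2^N * (2 * real N * (D' * A))"
  proof -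
    have "2^N * (real t / 2) * real N \<le> (\<Sum>i<N. G i) * real N"
      using lb sumG by (intro mult_right_mono) auto
    then show ?thesis using up by linarith
  qed
  then have "real t / 2 \<le> 2 * (D' * A)" using N1 by (simp add: field_simps)
  then show False using tbig by linarith
qed


end
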